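(* For a facility location problem with $n$ agents, the Leftmost mechanism $n$-approximates the complemented Gini index of utilities.
   Context: One facility is located on $[0,1]$; $n$ agents have locations $x_1\le\dots\le x_n$ in $[0,1]$. For a facility at $y$, agent $i$ has distance $d_i=|x_i-y|$ and utility $u_i=1-d_i$. The Gini index of utilities is $G_u=\frac{\sum_i\sum_j|u_i-u_j|}{2n\sum_i u_i}$ and the complemented Gini index is $1-G_u$. The Leftmost mechanism locates the facility at $x_1$. For a mechanism $M$ and a maximization objective $O$, the approximation ratio (over profiles with $n$ agents) is the supremum over all profiles $x\in[0,1]^n$ of $\mathrm{OPT}(x)/O(M(x))$, where $\mathrm{OPT}(x)=\max_{y\in[0,1]}O(y)$; $M$ "$\alpha$-approximates" $O$ if this approximation ratio equals $\alpha$. *)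

theory Defs
  imports Complex_Main
begin

definition profiles :: "nat \<Rightarrow> (nat \<Rightarrow> real) set" where
  "profiles n = {x. \<forall>i<n. x i \<in> {0..1}}"

definition utility :: "(nat \<Rightarrow> real) \<Rightarrow> real \<Rightarrow> nat \<Rightarrow> real" where
  "utility x y i = 1 - \<bar>x i - y\<bar>"

definition gini_util :: "nat \<Rightarrow> (nat \<Rightarrow> real) \<Rightarrow> real \<Rightarrow> real" where
  "gini_util n x y =
     (\<Sum>i<n. \<Sum>j<n. \<bar>utility x y i - utility x y j\<bar>) /
     (2 * real n * (\<Sum>i<n. utility x y i))"

definition comp_gini_util :: "nat \<Rightarrow> (nat \<Rightarrow> real) \<Rightarrow> real \<Rightarrow> real" where
  "comp_gini_util n x y = 1 - gini_util n x y"

definition opt_comp_gini :: "nat \<Rightarrow> (nat \<Rightarrow> real) \<Rightarrow> real" where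
  "opt_comp_gini n x = (SUP y\<in>{0..1}. comp_gini_util n x y)"

definition leftmost :: "nat \<Rightarrow> (nat \<Rightarrow> real) \<Rightarrow> real" where
  "leftmost n x = Min (x ` {..<n})"

definition leftmost_ratio_comp_gini :: "nat \<Rightarrow> real" where
  "leftmost_ratio_comp_gini n =
     (SUP x\<in>profiles n. opt_comp_gini n x / comp_gini_util n x (leftmost n x))"

end

theory Submission
  imports Defs
begin

lemma gini_num_bound:
  fixes u :: "nat \<Rightarrow> real"
  assumes "\<And>i. i < n \<Longrightarrow> u i \<ge> 0"
  shows "(\<Sum>i<n. \<Sum>j<n. \<bar>u i - u j\<bar>) \<le> 2 * (real n - 1) * (\<Sum>i<n. u i)"
proof -
  have eq: "\<bar>u i - u j\<bar> = u i + u j - 2 * min (u i) (u j)" for i j by auto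
  have m: "(\<Sum>j<n. min (u i) (u j)) \<ge> u i" if "i < n" for i
  proof -
    have "min (u i) (u i) \<le> (\<Sum>j<n. min (u i) (u j))"
      by (rule member_le_sum[where f="\<lambda>j. min (u i) (u j)"]) (use that assms in auto)
    then show ?thesis by simp
  qed
  have "(\<Sum>i<n. \<Sum>j<n. \<bar>u i - u j\<bar>)
      = (\<Sum>i<n. \<Sum>j<n. u i + u j - 2 * min (u i) (u j))" by (simp add: eq)
  also have "\<dots> = (\<Sum>i<n. real n * u i + (\<Sum>j<n. u j) - 2 * (\<Sum>j<n. min (u i) (u j)))"
    by (simp add: sum.distrib sum_subtractf sum_distrib_left)
  also have "\<dots> \<le> (\<Sum>i<n. real n * u i + (\<Sum>j<n. u j) - 2 * u i)"
    by (rule sum_mono) (use m in auto)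
  also have "\<dots> = 2 * (real n - 1) * (\<Sum>i<n. u i)"
    by (simp add: sum.distrib sum_subtractf sum_distrib_left[symmetric] sum_distrib_right[symmetric] algebra_simps)
  finally show ?thesis .
qed

lemma util_nonneg:
  assumes "x \<in> profiles n" "y \<in> {0..1}" "i < n"
  shows "utility x y i \<ge> 0"
  using assms unfolding profiles_def utility_def by auto

lemma comp_le1:
  assumes "x \<in> profiles n" "y \<in> {0..1}"
  shows "comp_gini_util n x y \<le> 1"
proof -
  have "(\<Sum>i<n. utility x y i) \<ge> 0" by (rule sum_nonneg) (use util_nonneg assms in auto)
  moreover have "(\<Sum>i<n. \<Sum>j<n. \<bar>utility x y i - utility x y j\<bar>) \<ge> 0"
    by (intro sum_nonneg) auto
  ultimately have "gini_util n x y \<ge> 0" unfolding gini_util_def by simp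
  then show ?thesis unfolding comp_gini_util_def by simp
qed

lemma opt_le1:
  assumes "x \<in> profiles n"
  shows "opt_comp_gini n x \<le> 1"
  unfolding opt_comp_gini_def
  by (rule cSUP_least) (use comp_le1 assms in auto)

lemma leftmost_props:
  assumes "x \<in> profiles n" "n \<ge> 1"
  shows "\<exists>k<n. leftmost n x = x k" "leftmost n x \<in> {0..1}"
proof -
  have ne: "x ` {..<n} \<noteq> {}" using assms by (auto simp: lessThan_empty_iff)
  have "leftmost n x \<in> x ` {..<n}" unfolding leftmost_def by (rule Min_in) (use ne in auto)
  then show k: "\<exists>k<n. leftmost n x = x k" by auto
  then show "leftmost n x \<in> {0..1}" using assms(1) unfolding profiles_def by auto
qed

lemma comp_leftmost_ge:
  assumes "x \<in> profiles n" "n \<ge> 1"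
  shows "comp_gini_util n x (leftmost n x) \<ge> 1 / real n"
proof -
  let ?y = "leftmost n x"
  obtain k where k: "k < n" "?y = x k" using leftmost_props[OF assms] by auto
  have y01: "?y \<in> {0..1}" using leftmost_props[OF assms] by auto
  have nn: "\<And>i. i < n \<Longrightarrow> utility x ?y i \<ge> 0" using util_nonneg[OF assms(1) y01] by auto
  have "utility x ?y k = 1" using k unfolding utility_def by simp
  moreover have "utility x ?y k \<le> (\<Sum>i<n. utility x ?y i)"
    by (rule member_le_sum) (use k nn in auto)
  ultimately have S: "(\<Sum>i<n. utility x ?y i) \<ge> 1" by simp
  have N: "(\<Sum>i<n. \<Sum>j<n. \<bar>utility x ?y i - utility x ?y j\<bar>) \<le> 2 * (real n - 1) * (\<Sum>i<n. utility x ?y i)"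
    by (rule gini_num_bound) (use nn in auto)
  have np: "real n > 0" using assms by simp
  have "gini_util n x ?y \<le> 2 * (real n - 1) * (\<Sum>i<n. utility x ?y i) / (2 * real n * (\<Sum>i<n. utility x ?y i))"
    unfolding gini_util_def using N S np by (intro divide_right_mono) auto
  also have "\<dots> = (real n - 1) / real n" using S np by (simp add: field_simps)
  finally have "gini_util n x ?y \<le> (real n - 1) / real n" .
  then show ?thesis unfolding comp_gini_util_def using np by (simp add: field_simps)
qed

lemma ratio_le:
  assumes "x \<in> profiles n" "n \<ge> 1"
  shows "opt_comp_gini n x / comp_gini_util n x (leftmost n x) \<le> real n"
proof -
  have c: "comp_gini_util n x (leftmost n x) \<ge> 1 / real n" by (rule comp_leftmost_ge[OF assms])
  have np: "real n > 0" using assms by simp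
  have cp: "comp_gini_util n x (leftmost n x) > 0" using c np by (smt (verit) divide_pos_pos)
  have "opt_comp_gini n x \<le> 1" by (rule opt_le1[OF assms(1)])
  also have "1 \<le> real n * comp_gini_util n x (leftmost n x)" using c np by (simp add: field_simps)
  finally show ?thesis using cp by (simp add: divide_le_eq)
qed

theorem theorem2:
  fixes n :: nat
  assumes "n \<ge> 1"
  shows "leftmost_ratio_comp_gini n = real n"
proof -
  define x0 :: "nat \<Rightarrow> real" where "x0 = (\<lambda>i. if i = 0 then 0 else 1)"
  have x0p: "x0 \<in> profiles n" unfolding profiles_def x0_def by auto
  have np: "real n > 0" using assms by simp
  have lm: "leftmost n x0 = 0"
  proof -
    have "0 \<in> x0 ` {..<n}" using assms unfolding x0_def by (auto intro!: image_eqI[where x=0])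
    moreover have "\<forall>a\<in>x0 ` {..<n}. 0 \<le> a" unfolding x0_def by auto
    ultimately show ?thesis unfolding leftmost_def
      by (intro antisym Min_le) (auto intro!: Min.boundedI)
  qed
  have u0: "utility x0 0 i = (if i = 0 then 1 else 0)" for i unfolding utility_def x0_def by simp
  have S0: "(\<Sum>i<n. utility x0 0 i) = 1"
    using assms by (simp add: u0 sum.delta)
  have inner: "(\<Sum>j<n. \<bar>utility x0 0 i - utility x0 0 j\<bar>) = (if i = 0 then real n - 1 else 1)"
    if "i < n" for i
  proof (cases "i = 0")
    case True
    have "(\<Sum>j<n. \<bar>utility x0 0 i - utility x0 0 j\<bar>) = (\<Sum>j<n. 1 - (if j = 0 then 1 else 0))"
      using True by (intro sum.cong) (auto simp: u0)
    also have "\<dots> = real n - 1" using assms by (simp add: sum_subtractf sum.delta)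
    finally show ?thesis using True by simp
  next
    case False
    have "(\<Sum>j<n. \<bar>utility x0 0 i - utility x0 0 j\<bar>) = (\<Sum>j<n. (if j = 0 then 1 else 0))"
      using False by (intro sum.cong) (auto simp: u0)
    also have "\<dots> = 1" using assms by (simp add: sum.delta)
    finally show ?thesis using False by simp
  qed
  have N0: "(\<Sum>i<n. \<Sum>j<n. \<bar>utility x0 0 i - utility x0 0 j\<bar>) = 2 * (real n - 1)"
  proof -
    have "(\<Sum>i<n. \<Sum>j<n. \<bar>utility x0 0 i - utility x0 0 j\<bar>)
        = (\<Sum>i<n. (if i = 0 then real n - 1 else 0) + (if i = 0 then 0 else 1))"
      by (intro sum.cong) (auto simp: inner)
    also have "\<dots> = (real n - 1) + (real n - 1)"
    proof -
      have "(\<Sum>i<n. (if i = 0 then 0 else (1::real))) = (\<Sum>i<n. 1 - (if i = 0 then 1 else 0))"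
        by (intro sum.cong) auto
      also have "\<dots> = real n - 1" using assms by (simp add: sum_subtractf sum.delta)
      finally show ?thesis using assms by (simp add: sum.distrib sum.delta)
    qed
    finally show ?thesis by simp
  qed
  have cl: "comp_gini_util n x0 (leftmost n x0) = 1 / real n"
    unfolding lm comp_gini_util_def gini_util_def N0 S0 using np by (simp add: field_simps)
  have uh: "utility x0 (1/2) i = 1/2" for i unfolding utility_def x0_def by simp
  have ch: "comp_gini_util n x0 (1/2) = 1" unfolding comp_gini_util_def gini_util_def uh by simp
  have opt: "opt_comp_gini n x0 = 1"
  proof (rule antisym)
    show "opt_comp_gini n x0 \<le> 1" by (rule opt_le1[OF x0p])
    have "comp_gini_util n x0 (1/2) \<le> opt_comp_gini n x0" unfolding opt_comp_gini_def
      by (rule cSUP_upper) (use comp_le1[OF x0p] in \<open>auto intro!: bdd_aboveI2[where M=1]\<close>)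
    then show "1 \<le> opt_comp_gini n x0" using ch by simp
  qed
  have r0: "opt_comp_gini n x0 / comp_gini_util n x0 (leftmost n x0) = real n"
    using opt cl by simp
  show ?thesis unfolding leftmost_ratio_comp_gini_def
  proof (rule antisym)
    show "(SUP x\<in>profiles n. opt_comp_gini n x / comp_gini_util n x (leftmost n x)) \<le> real n"
      by (rule cSUP_least) (use x0p ratio_le assms in auto)
    have "real n \<le> (SUP x\<in>profiles n. opt_comp_gini n x / comp_gini_util n x (leftmost n x))"
      unfolding r0[symmetric]
      by (rule cSUP_upper) (use x0p ratio_le assms in \<open>auto intro!: bdd_aboveI2[where M="real n"]\<close>)
    then show "real n \<le> (SUP x\<in>profiles n. opt_comp_gini n x / comp_gini_util n x (leftmost n x))" .
  qed
qed

end
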